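(* Let $\kappa$ be an infinite cardinal. Then $\clubsuit^{\Diamond}_{\kappa^+}$ implies ${\rm Gal}(\mathscr{D}_{\kappa^+},\kappa^+,\kappa^{++})$.
   Context: For a regular uncountable cardinal $\lambda$, a superclub sequence for $\lambda$ is a sequence $(S_\alpha\mid\alpha<\lambda)$ with $S_\alpha\subseteq\alpha$ for each $\alpha$, such that for every $A\in[\lambda]^\lambda$ there is $B\in[A]^\lambda$ for which $\{\alpha<\lambda\mid B\cap\alpha=S_\alpha\}$ is stationary in $\lambda$; $\clubsuit^{\Diamond}_\lambda$ is the statement that such a sequence exists. $\mathscr{D}_{\kappa^+}$ is the club filter on $\kappa^+$. ${\rm Gal}(\mathscr{D}_{\kappa^+},\kappa^+,\kappa^{++})$ (the Galvin property) means: for every sequence $(C_\alpha\mid\alpha<\kappa^{++})$ of elements of $\mathscr{D}_{\kappa^+}$ there is $I\subseteq\kappa^{++}$ with $|I|=\kappa^+$ such that $\bigcap_{\alpha\in I}C_\alpha\in\mathscr{D}_{\kappa^+}$ (i.e. contains a club of $\kappa^+$). *)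

theory Defs
  imports Main
begin

text \<open>Ordinals/cardinals are represented by well-order relations r; the ordinal's
elements are Field r, and the initial segment below a is underS r a.\<close>

definition unbounded_in :: "'a rel \<Rightarrow> 'a set \<Rightarrow> bool" where
  "unbounded_in r A \<longleftrightarrow> A \<subseteq> Field r \<and> (\<forall>a\<in>Field r. \<exists>b\<in>A. (a, b) \<in> r)"

text \<open>A is closed: every a below the top which is a limit point of A
(i.e. A is cofinal in the nonempty initial segment below a, so sup (A \<inter> a) = a) lies in A.\<close>
definition closed_in :: "'a rel \<Rightarrow> 'a set \<Rightarrow> bool" where
  "closed_in r A \<longleftrightarrow>
     (\<forall>a\<in>Field r. (A \<inter> underS r a \<noteq> {} \<and>
        (\<forall>b\<in>underS r a. \<exists>c\<in>A \<inter> underS r a. c \<noteq> b \<and> (b, c) \<in> r)) \<longrightarrow> a \<in> A)"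

definition club :: "'a rel \<Rightarrow> 'a set \<Rightarrow> bool" where
  "club r C \<longleftrightarrow> C \<subseteq> Field r \<and> closed_in r C \<and> unbounded_in r C"

definition stationary :: "'a rel \<Rightarrow> 'a set \<Rightarrow> bool" where
  "stationary r S \<longleftrightarrow> S \<subseteq> Field r \<and> (\<forall>C. club r C \<longrightarrow> S \<inter> C \<noteq> {})"

definition club_filter :: "'a rel \<Rightarrow> 'a set set" where
  "club_filter r = {D. D \<subseteq> Field r \<and> (\<exists>C. club r C \<and> C \<subseteq> D)}"

definition superclub_seq :: "'a rel \<Rightarrow> ('a \<Rightarrow> 'a set) \<Rightarrow> bool" where
  "superclub_seq r S \<longleftrightarrow>
     (\<forall>\<alpha>\<in>Field r. S \<alpha> \<subseteq> underS r \<alpha>) \<and>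
     (\<forall>A. A \<subseteq> Field r \<and> (card_of A, r) \<in> ordIso \<longrightarrow>
        (\<exists>B. B \<subseteq> A \<and> (card_of B, r) \<in> ordIso \<and>
             stationary r {\<alpha>\<in>Field r. B \<inter> underS r \<alpha> = S \<alpha>}))"

definition clubsuit_diamond :: "'a rel \<Rightarrow> bool" where
  "clubsuit_diamond r \<longleftrightarrow> (\<exists>S. superclub_seq r S)"

definition Galvin :: "'a rel \<Rightarrow> 'b rel \<Rightarrow> bool" where
  "Galvin l m \<longleftrightarrow>
     (\<forall>C :: 'b \<Rightarrow> 'a set. (\<forall>\<alpha>\<in>Field m. C \<alpha> \<in> club_filter l) \<longrightarrow>
        (\<exists>I. I \<subseteq> Field m \<and> (card_of I, l) \<in> ordIso \<and> (\<Inter>\<alpha>\<in>I. C \<alpha>) \<in> club_filter l))"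

end

theory Submission
  imports Defs
begin
unbundle cardinal_syntax

definition accp :: "'a rel \<Rightarrow> 'a set \<Rightarrow> 'a \<Rightarrow> bool" where
  "accp r A a \<longleftrightarrow> a \<in> Field r \<and> A \<inter> underS r a \<noteq> {} \<and>
        (\<forall>b\<in>underS r a. \<exists>c\<in>A \<inter> underS r a. c \<noteq> b \<and> (b, c) \<in> r)"

lemma closed_in_accp: "closed_in r A \<longleftrightarrow> (\<forall>a. accp r A a \<longrightarrow> a \<in> A)"
  unfolding closed_in_def accp_def by blast

lemma accp_mono: "accp r A a \<Longrightarrow> A \<subseteq> A' \<Longrightarrow> accp r A' a"
  unfolding accp_def by blast

lemma accp_cong: assumes h: "A \<inter> underS r a = A' \<inter> underS r a" shows "accp r A a = accp r A' a"
  by (simp only: accp_def h)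

locale reg =
  fixes r :: "'a rel"
  assumes co: "Card_order r" and rg: "regularCard r" and unc: "|UNIV::nat set| <o r"
begin

abbreviation "F \<equiv> Field r"
definition lt where "lt x y \<longleftrightarrow> (x,y) \<in> r \<and> x \<noteq> y"

lemma WO: "Well_order r" using co unfolding card_order_on_def by simp
lemma refl: "x \<in> F \<Longrightarrow> (x,x) \<in> r"
  using WO unfolding well_order_on_def linear_order_on_def partial_order_on_def preorder_on_def refl_on_def by blast
lemma trans: "(x,y) \<in> r \<Longrightarrow> (y,z) \<in> r \<Longrightarrow> (x,z) \<in> r"
  using WO unfolding well_order_on_def linear_order_on_def partial_order_on_def preorder_on_def trans_def by blast
lemma antisym: "(x,y) \<in> r \<Longrightarrow> (y,x) \<in> r \<Longrightarrow> x = y"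
  using WO unfolding well_order_on_def linear_order_on_def partial_order_on_def antisym_def by blast
lemma total: "x \<in> F \<Longrightarrow> y \<in> F \<Longrightarrow> (x,y) \<in> r \<or> (y,x) \<in> r"
  using WO refl unfolding well_order_on_def linear_order_on_def total_on_def by metis
lemma wf: "wf (r - Id)" using WO unfolding well_order_on_def by blast
lemma inF: "(x,y) \<in> r \<Longrightarrow> x \<in> F \<and> y \<in> F" by (auto intro: FieldI1 FieldI2)

lemma lt_le_trans: "lt x y \<Longrightarrow> (y,z) \<in> r \<Longrightarrow> lt x z"
proof -
  assume a: "lt x y" "(y,z) \<in> r"
  hence "(x,z) \<in> r" using trans[of x y z] unfolding lt_def by simp
  moreover have "x \<noteq> z"
  proof
    assume "x = z" hence "(y,x) \<in> r" using a by simp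
    hence "x = y" using antisym[of x y] a unfolding lt_def by simp
    thus False using a unfolding lt_def by simp
  qed
  ultimately show ?thesis unfolding lt_def by simp
qed
lemma le_lt_trans: "(x,y) \<in> r \<Longrightarrow> lt y z \<Longrightarrow> lt x z"
proof -
  assume a: "(x,y) \<in> r" "lt y z"
  hence "(x,z) \<in> r" using trans[of x y z] unfolding lt_def by simp
  moreover have "x \<noteq> z"
  proof
    assume "x = z" hence "(z,y) \<in> r" using a by simp
    hence "z = y" using antisym[of z y] a unfolding lt_def by simp
    thus False using a unfolding lt_def by simp
  qed
  ultimately show ?thesis unfolding lt_def by simp
qed
lemma lt_trans: "lt x y \<Longrightarrow> lt y z \<Longrightarrow> lt x z"
proof -
  assume "lt x y" "lt y z"
  thus ?thesis using lt_le_trans[of x y z] unfolding lt_def by blast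
qed
lemma not_lt: "x \<in> F \<Longrightarrow> y \<in> F \<Longrightarrow> \<not> lt x y \<Longrightarrow> (y,x) \<in> r"
  unfolding lt_def using total[of x y] refl[of x] by auto
lemma underS_lt: "underS r a = {b. lt b a}" unfolding underS_def lt_def by auto

lemma infF: "\<not> finite F"
proof
  assume "finite F"
  moreover have "\<not> finite (Field |UNIV::nat set| )" by (simp add: Field_card_of)
  ultimately have "r <o |UNIV::nat set|"
    by (rule finite_ordLess_infinite[OF WO card_of_Well_order])
  hence "r \<le>o |UNIV::nat set|" by (rule ordLess_imp_ordLeq)
  thus False using not_ordLess_ordLeq[OF unc] by simp
qed

lemma nomax: "x \<in> F \<Longrightarrow> \<exists>y\<in>F. lt x y"
  using infinite_Card_order_limit[OF co infF, of x] unfolding lt_def by auto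

lemma fin_small: "finite A \<Longrightarrow> |A| <o r"
proof -
  assume "finite A"
  hence "finite (Field |A| )" by (simp add: Field_card_of)
  thus ?thesis by (rule finite_ordLess_infinite[OF card_of_Well_order WO _ infF])
qed

lemma bound: assumes "X \<subseteq> F" "|X| <o r" shows "\<exists>a\<in>F. \<forall>x\<in>X. lt x a"
proof -
  have "\<not> cofinal X r"
  proof
    assume "cofinal X r"
    hence "|X| =o r" using rg assms(1) unfolding regularCard_def by blast
    thus False using not_ordLess_ordIso[OF assms(2)] by simp
  qed
  then obtain a where a: "a \<in> F" "\<forall>b\<in>X. a = b \<or> (a,b) \<notin> r" unfolding cofinal_def by blast
  obtain a' where a': "a' \<in> F" "lt a a'" using nomax a by blast
  have "\<forall>x\<in>X. lt x a'"
  proof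
    fix x assume x: "x \<in> X"
    hence xF: "x \<in> F" using assms by blast
    have "(x,a) \<in> r"
    proof (cases "x = a")
      case True thus ?thesis using refl xF by simp
    next
      case False
      hence "(a,x) \<notin> r" using a(2) x by fastforce
      thus ?thesis using total[OF xF a(1)] by simp
    qed
    thus "lt x a'" using le_lt_trans a'(2) by blast
  qed
  thus ?thesis using a' by blast
qed

lemma Refl: "Refl r"
  using WO unfolding well_order_on_def linear_order_on_def partial_order_on_def preorder_on_def by simp

lemma under_small: "x \<in> F \<Longrightarrow> |under r x| <o r"
proof -
  assume x: "x \<in> F"
  have "under r x = underS r x \<union> {x}" by (rule Refl_under_underS[OF Refl x])
  moreover have "|underS r x| <o r" using card_of_underS[OF co x] .
  ultimately show ?thesis using card_of_Un_ordLess_infinite_Field[OF infF co _ fin_small[of "{x}"]] by simp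
qed

lemma iter_F: "a \<in> F \<Longrightarrow> \<forall>x\<in>F. g x \<in> F \<Longrightarrow> (g^^n) a \<in> F"
  by (induction n) auto

lemma iter_mono: assumes "a \<in> F" "\<forall>x\<in>F. g x \<in> F \<and> lt x (g x)"
  shows "((g^^n) a, (g^^(n+k)) a) \<in> r"
proof (induction k)
  case 0 then show ?case using refl iter_F assms by auto
next
  case (Suc k)
  have "(g^^(n+k)) a \<in> F" using iter_F assms by blast
  hence "lt ((g^^(n+k)) a) ((g^^(n+Suc k)) a)" using assms by simp
  then show ?case using trans[OF Suc.IH] unfolding lt_def by simp
qed

lemma iter_mono': assumes "a \<in> F" "\<forall>x\<in>F. g x \<in> F \<and> lt x (g x)" "n \<le> m"
  shows "((g^^n) a, (g^^m) a) \<in> r"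
  using iter_mono[OF assms(1,2), of n "m-n"] assms(3) by simp

lemma omega: assumes a: "a \<in> F" and g: "\<forall>x\<in>F. g x \<in> F \<and> lt x (g x)"
  shows "\<exists>s\<in>F. lt a s \<and> (\<forall>n. lt ((g^^n) a) s) \<and> (\<forall>b. lt b s \<longrightarrow> (\<exists>n. lt b ((g^^n) a)))"
proof -
  have gF: "\<forall>x\<in>F. g x \<in> F" using g by blast
  have itF: "\<And>n. (g^^n) a \<in> F" using iter_F[OF a gF] .
  let ?X = "range (\<lambda>n. (g^^n) a)"
  have "?X \<subseteq> F" using itF by blast
  moreover have "|?X| <o r" using card_of_image[of "\<lambda>n. (g^^n) a" UNIV] unc by (rule ordLeq_ordLess_trans)
  ultimately obtain u where u: "u \<in> F" "\<forall>x\<in>?X. lt x u" using bound by blast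
  let ?U = "{s\<in>F. \<forall>n. lt ((g^^n) a) s}"
  have ne: "u \<in> ?U" using u by simp
  obtain s where s: "s \<in> ?U" "\<And>y. (y, s) \<in> r - Id \<Longrightarrow> y \<notin> ?U"
    by (rule wfE_min[OF wf ne]) blast
  have sF: "s \<in> F" and sall: "\<forall>n. lt ((g^^n) a) s" using s(1) by simp_all
  have lim: "\<forall>b. lt b s \<longrightarrow> (\<exists>n. lt b ((g^^n) a))"
  proof (intro allI impI)
    fix b assume b: "lt b s"
    hence bF: "b \<in> F" using inF unfolding lt_def by blast
    have "(b,s) \<in> r - Id" using b unfolding lt_def by simp
    hence "b \<notin> ?U" by (rule s(2))
    hence "\<exists>n. \<not> lt ((g^^n) a) b" using bF by simp
    then obtain n where n: "\<not> lt ((g^^n) a) b" by blast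
    have "(b, (g^^n) a) \<in> r" by (rule not_lt[OF itF bF n])
    moreover have "lt ((g^^n) a) (g ((g^^n) a))" using g itF[of n] by simp
    ultimately have "lt b (g ((g^^n) a))" by (rule le_lt_trans)
    hence "lt b ((g^^(Suc n)) a)" by simp
    thus "\<exists>n. lt b ((g^^n) a)" by blast
  qed
  have "lt ((g^^0) a) s" using sall by blast
  hence las: "lt a s" by simp
  show ?thesis by (rule bexI[OF _ sF]) (intro conjI las sall lim)
qed

lemma accpI: assumes "s \<in> F" "\<exists>c\<in>A. lt c s" "\<forall>b. lt b s \<longrightarrow> (\<exists>c\<in>A. lt b c \<and> lt c s)"
  shows "accp r A s"
  unfolding accp_def underS_lt
proof (intro conjI ballI)
  show "s \<in> F" by (rule assms(1))
  obtain c where "c \<in> A" "lt c s" using assms(2) by blast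
  thus "A \<inter> {b. lt b s} \<noteq> {}" by blast
next
  fix b assume "b \<in> {b. lt b s}"
  then obtain c where "c \<in> A" "lt b c" "lt c s" using assms(3) by blast
  thus "\<exists>c\<in>A \<inter> {b. lt b s}. c \<noteq> b \<and> (b, c) \<in> r"
    by (intro bexI[of _ c]) (auto simp: lt_def)
qed

lemma unb_strict: "unbounded_in r A \<Longrightarrow> x \<in> F \<Longrightarrow> \<exists>b\<in>A. lt x b"
  proof -
  assume u: "unbounded_in r A" and x: "x \<in> F"
  obtain y where y: "y \<in> F" "lt x y" using nomax x by blast
  then obtain b where "b \<in> A" "(y,b) \<in> r" using u unfolding unbounded_in_def by blast
  thus ?thesis using y lt_le_trans by blast
qed


lemma accpF: "accp r A a \<Longrightarrow> a \<in> F" unfolding accp_def by blast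
lemma accpD0: assumes "accp r A a" shows "\<exists>c\<in>A. lt c a"
proof -
  obtain c where "c \<in> A" "c \<in> underS r a" using assms unfolding accp_def by blast
  thus ?thesis unfolding underS_lt by blast
qed
lemma accpD: assumes "accp r A a" "lt b a" shows "\<exists>c\<in>A. lt b c \<and> lt c a"
proof -
  have "b \<in> underS r a" using assms(2) unfolding underS_lt by simp
  then obtain c where "c \<in> A" "c \<in> underS r a" "c \<noteq> b" "(b,c) \<in> r" using assms(1) unfolding accp_def by blast
  thus ?thesis unfolding underS_lt lt_def by blast
qed

lemma closedD: "closed_in r A \<Longrightarrow> accp r A a \<Longrightarrow> a \<in> A"
  unfolding closed_in_accp by blast

lemma lt_F: "lt x y \<Longrightarrow> x \<in> F \<and> y \<in> F" unfolding lt_def using inF by blast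

lemma acc_club: assumes B: "B \<subseteq> F" and u: "\<forall>x\<in>F. \<exists>b\<in>B. lt x b"
  shows "club r {a. accp r B a}"
  unfolding club_def
proof (intro conjI)
  show "{a. accp r B a} \<subseteq> F" using accpF by blast
  show "closed_in r {a. accp r B a}"
    unfolding closed_in_accp
  proof (intro allI impI)
    fix e assume h: "accp r {a. accp r B a} e"
    show "e \<in> {a. accp r B a}"
    proof (simp, rule accpI)
      show "e \<in> F" using accpF[OF h] .
      obtain c where c: "accp r B c" "lt c e" using accpD0[OF h] by blast
      obtain d where "d \<in> B" "lt d c" using accpD0[OF c(1)] by blast
      thus "\<exists>c\<in>B. lt c e" using lt_trans c(2) by blast
      show "\<forall>b. lt b e \<longrightarrow> (\<exists>c\<in>B. lt b c \<and> lt c e)"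
      proof (intro allI impI)
        fix b assume b: "lt b e"
        obtain c where c: "accp r B c" "lt b c" "lt c e" using accpD[OF h b] by blast
        obtain d where d: "d \<in> B" "lt b d" "lt d c" using accpD[OF c(1) c(2)] by blast
        have "lt d e" using lt_trans[OF d(3) c(3)] .
        thus "\<exists>c\<in>B. lt b c \<and> lt c e" using d by blast
      qed
    qed
  qed
  show "unbounded_in r {a. accp r B a}"
    unfolding unbounded_in_def
  proof (intro conjI ballI)
    show "{a. accp r B a} \<subseteq> F" using accpF by blast
    fix a assume a: "a \<in> F"
    define g where "g = (\<lambda>x. SOME b. b \<in> B \<and> lt x b)"
    have gB: "\<And>x. x \<in> F \<Longrightarrow> g x \<in> B \<and> lt x (g x)"
    proof -
      fix x assume "x \<in> F"
      hence "\<exists>b. b \<in> B \<and> lt x b" using u by blast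
      thus "g x \<in> B \<and> lt x (g x)" unfolding g_def by (rule someI_ex)
    qed
    have g: "\<forall>x\<in>F. g x \<in> F \<and> lt x (g x)" using gB B by blast
    obtain s where sF: "s \<in> F" and las: "lt a s" and sall: "\<forall>n. lt ((g^^n) a) s"
      and lim: "\<forall>b. lt b s \<longrightarrow> (\<exists>n. lt b ((g^^n) a))"
      using omega[OF a g] by blast
    have itF: "\<And>n. (g^^n) a \<in> F" using iter_F[OF a] g by blast
    have "accp r B s"
    proof (rule accpI[OF sF])
      have "lt ((g^^(Suc 0)) a) s" using sall by blast
      hence "lt (g a) s" by simp
      thus "\<exists>c\<in>B. lt c s" using gB[OF a] by blast
      show "\<forall>b. lt b s \<longrightarrow> (\<exists>c\<in>B. lt b c \<and> lt c s)"
      proof (intro allI impI)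
        fix b assume "lt b s"
        then obtain n where n: "lt b ((g^^n) a)" using lim by blast
        have 1: "g ((g^^n) a) \<in> B" "lt ((g^^n) a) (g ((g^^n) a))" using gB[OF itF[of n]] by auto
        have "lt ((g^^(Suc n)) a) s" using sall by blast
        hence 2: "lt (g ((g^^n) a)) s" by simp
        show "\<exists>c\<in>B. lt b c \<and> lt c s" using 1 2 lt_trans[OF n 1(2)] by blast
      qed
    qed
    thus "\<exists>b\<in>{a. accp r B a}. (a, b) \<in> r" using las unfolding lt_def by blast
  qed
qed

lemma above_club: assumes a: "a \<in> F" shows "club r {x\<in>F. lt a x}"
  unfolding club_def
proof (intro conjI)
  show "{x\<in>F. lt a x} \<subseteq> F" by blast
  show "closed_in r {x\<in>F. lt a x}"
    unfolding closed_in_accp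
  proof (intro allI impI)
    fix e assume h: "accp r {x\<in>F. lt a x} e"
    obtain c where "c \<in> {x\<in>F. lt a x}" "lt c e" using accpD0[OF h] by blast
    hence "lt a e" using lt_trans by blast
    thus "e \<in> {x\<in>F. lt a x}" using accpF[OF h] by blast
  qed
  show "unbounded_in r {x\<in>F. lt a x}"
    unfolding unbounded_in_def
  proof (intro conjI ballI)
    show "{x\<in>F. lt a x} \<subseteq> F" by blast
    fix x assume x: "x \<in> F"
    have "{x,a} \<subseteq> F" using x a by blast
    moreover have "|{x,a}| <o r" by (rule fin_small) simp
    ultimately obtain y where "y \<in> F" "\<forall>z\<in>{x,a}. lt z y" using bound by blast
    thus "\<exists>b\<in>{x\<in>F. lt a x}. (x, b) \<in> r" unfolding lt_def by blast
  qed
qed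

lemma card_unb: assumes "A \<subseteq> F" "\<forall>x\<in>F. \<exists>b\<in>A. lt x b" shows "|A| =o r"
proof -
  have "cofinal A r" unfolding cofinal_def
  proof
    fix x assume "x \<in> F"
    then obtain b where "b \<in> A" "lt x b" using assms(2) by blast
    thus "\<exists>b\<in>A. x \<noteq> b \<and> (x, b) \<in> r" unfolding lt_def by blast
  qed
  thus ?thesis using rg assms(1) unfolding regularCard_def by blast
qed

lemma full_unb: assumes A: "A \<subseteq> F" "|A| =o r" and x: "x \<in> F" shows "\<exists>b\<in>A. lt x b"
proof (rule ccontr)
  assume "\<not> (\<exists>b\<in>A. lt x b)"
  hence "A \<subseteq> under r x" unfolding under_def using not_lt[OF x] A(1) by blast
  hence "|A| \<le>o |under r x|" by (rule card_of_mono1)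
  hence "|A| <o r" using under_small[OF x] by (rule ordLeq_ordLess_trans)
  thus False using not_ordLess_ordIso A(2) by blast
qed

lemma stat_unb: assumes "stationary r T" "x \<in> F" shows "\<exists>b\<in>T. lt x b"
proof -
  have "T \<inter> {y\<in>F. lt x y} \<noteq> {}" using assms above_club[OF assms(2)] unfolding stationary_def by blast
  thus ?thesis by blast
qed


lemma club_unb: "club r C \<Longrightarrow> x \<in> F \<Longrightarrow> \<exists>b\<in>C. lt x b"
  unfolding club_def using unb_strict by blast

lemma diag_club: assumes C0: "club r C0" and X: "X \<subseteq> F" and D: "\<forall>d\<in>X. club r (D d)"
  shows "club r {e\<in>C0. \<forall>d\<in>X. lt d e \<longrightarrow> e \<in> D d}"
  unfolding club_def
proof (intro conjI)
  let ?E = "{e\<in>C0. \<forall>d\<in>X. lt d e \<longrightarrow> e \<in> D d}"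
  have C0F: "C0 \<subseteq> F" using C0 unfolding club_def by blast
  show "?E \<subseteq> F" using C0F by blast
  show "closed_in r ?E"
    unfolding closed_in_accp
  proof (intro allI impI)
    fix e assume h: "accp r ?E e"
    have eF: "e \<in> F" using accpF[OF h] .
    have "accp r C0 e" using accp_mono[OF h] by blast
    hence eC0: "e \<in> C0" using C0 closedD unfolding club_def by blast
    have "\<forall>d\<in>X. lt d e \<longrightarrow> e \<in> D d"
    proof (intro ballI impI)
      fix d assume d: "d \<in> X" "lt d e"
      have dF: "d \<in> F" using d X by blast
      have "accp r (D d) e"
      proof (rule accpI[OF eF])
        obtain c where "c \<in> ?E" "lt d c" "lt c e" using accpD[OF h d(2)] by blast
        thus "\<exists>c\<in>D d. lt c e" using d(1) by blast
        show "\<forall>b. lt b e \<longrightarrow> (\<exists>c\<in>D d. lt b c \<and> lt c e)"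
        proof (intro allI impI)
          fix b assume b: "lt b e"
          have bF: "b \<in> F" using lt_F[OF b] by blast
          define b' where "b' = (if (b,d) \<in> r then d else b)"
          have 1: "(d,b') \<in> r" "(b,b') \<in> r"
          proof -
            show "(d,b') \<in> r"
            proof (cases "(b,d) \<in> r")
              case True thus ?thesis unfolding b'_def using refl[OF dF] by simp
            next
              case False thus ?thesis unfolding b'_def using total[OF bF dF] by simp
            qed
            show "(b,b') \<in> r"
            proof (cases "(b,d) \<in> r")
              case True thus ?thesis unfolding b'_def by simp
            next
              case False thus ?thesis unfolding b'_def using refl[OF bF] by simp
            qed
          qed
          have "lt b' e" unfolding b'_def using b d(2) by simp
          then obtain c where c: "c \<in> ?E" "lt b' c" "lt c e" using accpD[OF h] by blast
          have "lt d c" using le_lt_trans[OF 1(1) c(2)] .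
          hence "c \<in> D d" using c(1) d(1) by blast
          moreover have "lt b c" using le_lt_trans[OF 1(2) c(2)] .
          ultimately show "\<exists>c\<in>D d. lt b c \<and> lt c e" using c(3) by blast
        qed
      qed
      thus "e \<in> D d" using D d(1) closedD unfolding club_def by blast
    qed
    thus "e \<in> ?E" using eC0 by blast
  qed
  show "unbounded_in r ?E"
    unfolding unbounded_in_def
  proof (intro conjI ballI)
    show "?E \<subseteq> F" using C0F by blast
    fix a assume a: "a \<in> F"
    define c0 where "c0 = (\<lambda>x. SOME c. c \<in> C0 \<and> lt x c)"
    define cD where "cD = (\<lambda>d x. SOME c. c \<in> D d \<and> lt x c)"
    have c0: "\<And>x. x \<in> F \<Longrightarrow> c0 x \<in> C0 \<and> lt x (c0 x)"
    proof -
      fix x assume "x \<in> F"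
      hence "\<exists>c. c \<in> C0 \<and> lt x c" using club_unb[OF C0] by blast
      thus "c0 x \<in> C0 \<and> lt x (c0 x)" unfolding c0_def by (rule someI_ex)
    qed
    have cD: "\<And>d x. d \<in> X \<Longrightarrow> x \<in> F \<Longrightarrow> cD d x \<in> D d \<and> lt x (cD d x)"
    proof -
      fix d x assume "d \<in> X" "x \<in> F"
      hence "\<exists>c. c \<in> D d \<and> lt x c" using club_unb D by blast
      thus "cD d x \<in> D d \<and> lt x (cD d x)" unfolding cD_def by (rule someI_ex)
    qed
    define W where "W = (\<lambda>x. (\<lambda>d. cD d x) ` (X \<inter> under r x) \<union> {c0 x})"
    have WF: "\<And>x. x \<in> F \<Longrightarrow> W x \<subseteq> F"
    proof -
      fix x assume x: "x \<in> F"
      have "(\<lambda>d. cD d x) ` (X \<inter> under r x) \<subseteq> F"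
      proof
        fix y assume "y \<in> (\<lambda>d. cD d x) ` (X \<inter> under r x)"
        then obtain d where "d \<in> X" "y = cD d x" by blast
        thus "y \<in> F" using cD[of d x] x lt_F by blast
      qed
      moreover have "c0 x \<in> F" using c0[OF x] lt_F by blast
      ultimately show "W x \<subseteq> F" unfolding W_def by blast
    qed
    have Ws: "\<And>x. x \<in> F \<Longrightarrow> |W x| <o r"
    proof -
      fix x assume x: "x \<in> F"
      have "|(\<lambda>d. cD d x) ` (X \<inter> under r x)| \<le>o |X \<inter> under r x|" by (rule card_of_image)
      moreover have "|X \<inter> under r x| \<le>o |under r x|" by (rule card_of_mono1) blast
      ultimately have "|(\<lambda>d. cD d x) ` (X \<inter> under r x)| \<le>o |under r x|" by (rule ordLeq_transitive)
      hence "|(\<lambda>d. cD d x) ` (X \<inter> under r x)| <o r" using under_small[OF x] by (rule ordLeq_ordLess_trans)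
      thus "|W x| <o r" unfolding W_def using card_of_Un_ordLess_infinite_Field[OF infF co _ fin_small[of "{c0 x}"]] by simp
    qed
    define g where "g = (\<lambda>x. SOME y. y \<in> F \<and> (\<forall>w\<in>W x. lt w y))"
    have gW: "\<And>x. x \<in> F \<Longrightarrow> g x \<in> F \<and> (\<forall>w\<in>W x. lt w (g x))"
    proof -
      fix x assume x: "x \<in> F"
      have "\<exists>y. y \<in> F \<and> (\<forall>w\<in>W x. lt w y)" using bound[OF WF[OF x] Ws[OF x]] by blast
      thus "g x \<in> F \<and> (\<forall>w\<in>W x. lt w (g x))" unfolding g_def by (rule someI_ex)
    qed
    have gc0: "\<And>x. x \<in> F \<Longrightarrow> lt (c0 x) (g x)" using gW unfolding W_def by blast
    have gcD: "\<And>d x. d \<in> X \<Longrightarrow> x \<in> F \<Longrightarrow> (d,x) \<in> r \<Longrightarrow> lt (cD d x) (g x)"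
    proof -
      fix d x assume "d \<in> X" "x \<in> F" "(d,x) \<in> r"
      hence "cD d x \<in> W x" unfolding W_def under_def by blast
      thus "lt (cD d x) (g x)" using gW[OF \<open>x \<in> F\<close>] by blast
    qed
    have g: "\<forall>x\<in>F. g x \<in> F \<and> lt x (g x)"
    proof
      fix x assume x: "x \<in> F"
      have "lt x (g x)" using lt_trans[OF conjunct2[OF c0[OF x]] gc0[OF x]] .
      thus "g x \<in> F \<and> lt x (g x)" using gW[OF x] by blast
    qed
    obtain s where sF: "s \<in> F" and las: "lt a s" and sall: "\<forall>n. lt ((g^^n) a) s"
      and lim: "\<forall>b. lt b s \<longrightarrow> (\<exists>n. lt b ((g^^n) a))"
      using omega[OF a g] by blast
    have itF: "\<And>n. (g^^n) a \<in> F" using iter_F[OF a] g by blast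
    have nxt: "\<And>n. lt (g ((g^^n) a)) s"
    proof -
      fix n have "lt ((g^^(Suc n)) a) s" using sall by blast
      thus "lt (g ((g^^n) a)) s" by simp
    qed
    have "accp r C0 s"
    proof (rule accpI[OF sF])
      have "c0 a \<in> C0" "lt (c0 a) (g a)" using c0[OF a] gc0[OF a] by auto
      moreover have "lt (g a) s" using nxt[of 0] by simp
      ultimately show "\<exists>c\<in>C0. lt c s" using lt_trans by blast
      show "\<forall>b. lt b s \<longrightarrow> (\<exists>c\<in>C0. lt b c \<and> lt c s)"
      proof (intro allI impI)
        fix b assume "lt b s"
        then obtain n where n: "lt b ((g^^n) a)" using lim by blast
        have 1: "c0 ((g^^n) a) \<in> C0" "lt ((g^^n) a) (c0 ((g^^n) a))" using c0[OF itF[of n]] by auto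
        have 2: "lt (c0 ((g^^n) a)) s" using lt_trans[OF gc0[OF itF[of n]] nxt[of n]] .
        show "\<exists>c\<in>C0. lt b c \<and> lt c s" using 1 2 lt_trans[OF n 1(2)] by blast
      qed
    qed
    hence sC0: "s \<in> C0" using C0 closedD unfolding club_def by blast
    have "\<forall>d\<in>X. lt d s \<longrightarrow> s \<in> D d"
    proof (intro ballI impI)
      fix d assume d: "d \<in> X" "lt d s"
      obtain n where n: "lt d ((g^^n) a)" using lim d(2) by blast
      have "accp r (D d) s"
      proof (rule accpI[OF sF])
        have "(d, (g^^n) a) \<in> r" using n unfolding lt_def by blast
        hence "lt (cD d ((g^^n) a)) s" using lt_trans[OF gcD[OF d(1) itF[of n]] nxt[of n]] by blast
        thus "\<exists>c\<in>D d. lt c s" using cD[OF d(1) itF[of n]] by blast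
        show "\<forall>b. lt b s \<longrightarrow> (\<exists>c\<in>D d. lt b c \<and> lt c s)"
        proof (intro allI impI)
          fix b assume "lt b s"
          then obtain m where m: "lt b ((g^^m) a)" using lim by blast
          let ?p = "max n m"
          have gi: "\<forall>x\<in>F. g x \<in> F \<and> lt x (g x)" by (rule g)
          have "((g^^n) a, (g^^?p) a) \<in> r" by (rule iter_mono'[OF a gi]) simp
          hence dp: "(d, (g^^?p) a) \<in> r" using n unfolding lt_def using trans by blast
          have "((g^^m) a, (g^^?p) a) \<in> r" by (rule iter_mono'[OF a gi]) simp
          hence bp: "lt b ((g^^?p) a)" using lt_le_trans[OF m] by blast
          have 1: "cD d ((g^^?p) a) \<in> D d" "lt ((g^^?p) a) (cD d ((g^^?p) a))"
            using cD[OF d(1) itF[of ?p]] by auto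
          have 2: "lt (cD d ((g^^?p) a)) s" using lt_trans[OF gcD[OF d(1) itF[of ?p] dp] nxt[of ?p]] .
          show "\<exists>c\<in>D d. lt b c \<and> lt c s" using 1 2 lt_trans[OF bp 1(2)] by blast
        qed
      qed
      thus "s \<in> D d" using D d(1) closedD unfolding club_def by blast
    qed
    hence "s \<in> ?E" using sC0 by blast
    thus "\<exists>b\<in>?E. (a, b) \<in> r" using las unfolding lt_def by blast
  qed
qed


lemma inj_choice: assumes T: "T \<subseteq> F" and K: "\<forall>d\<in>T. \<forall>Y. |Y| <o r \<longrightarrow> (\<exists>x\<in>K d. x \<notin> Y)"
  shows "\<exists>f. inj_on f T \<and> (\<forall>d\<in>T. f d \<in> K d)"
proof -
  define H where "H = (\<lambda>h d. SOME x. x \<in> K d \<and> x \<notin> h ` (T \<inter> underS r d))"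
  define f where "f = wfrec (r - Id) H"
  have feq: "\<And>d. f d = (SOME x. x \<in> K d \<and> x \<notin> f ` (T \<inter> underS r d))"
  proof -
    fix d
    have "f d = H (cut f (r - Id) d) d" unfolding f_def by (rule wfrec[OF wf])
    moreover have "cut f (r - Id) d ` (T \<inter> underS r d) = f ` (T \<inter> underS r d)"
    proof (rule image_cong[OF HOL.refl])
      fix y assume "y \<in> T \<inter> underS r d"
      hence "(y,d) \<in> r - Id" unfolding underS_def by blast
      thus "cut f (r - Id) d y = f y" by (rule cut_apply)
    qed
    ultimately show "f d = (SOME x. x \<in> K d \<and> x \<notin> f ` (T \<inter> underS r d))" unfolding H_def by simp
  qed
  have fK: "\<And>d. d \<in> T \<Longrightarrow> f d \<in> K d \<and> f d \<notin> f ` (T \<inter> underS r d)"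
  proof -
    fix d assume d: "d \<in> T"
    have "|f ` (T \<inter> underS r d)| \<le>o |T \<inter> underS r d|" by (rule card_of_image)
    moreover have "|T \<inter> underS r d| \<le>o |underS r d|" by (rule card_of_mono1) blast
    ultimately have "|f ` (T \<inter> underS r d)| \<le>o |underS r d|" by (rule ordLeq_transitive)
    moreover have "|underS r d| <o r" using card_of_underS[OF co] d T by blast
    ultimately have "|f ` (T \<inter> underS r d)| <o r" by (rule ordLeq_ordLess_trans)
    hence "\<exists>x. x \<in> K d \<and> x \<notin> f ` (T \<inter> underS r d)" using K d by blast
    hence "(SOME x. x \<in> K d \<and> x \<notin> f ` (T \<inter> underS r d)) \<in> K d \<and>
           (SOME x. x \<in> K d \<and> x \<notin> f ` (T \<inter> underS r d)) \<notin> f ` (T \<inter> underS r d)" by (rule someI_ex)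
    thus "f d \<in> K d \<and> f d \<notin> f ` (T \<inter> underS r d)" using feq[of d] by simp
  qed
  have "inj_on f T"
  proof (rule inj_onI, rule ccontr)
    fix x y assume x: "x \<in> T" and y: "y \<in> T" and e: "f x = f y" and ne: "x \<noteq> y"
    have "(x,y) \<in> r \<or> (y,x) \<in> r" using total x y T by blast
    thus False
    proof
      assume "(x,y) \<in> r"
      hence "x \<in> T \<inter> underS r y" using x ne unfolding underS_def by blast
      hence "f x \<in> f ` (T \<inter> underS r y)" by (rule imageI)
      thus False using fK[OF y] e by simp
    next
      assume "(y,x) \<in> r"
      hence "y \<in> T \<inter> underS r x" using y ne unfolding underS_def by blast
      hence "f y \<in> f ` (T \<inter> underS r x)" by (rule imageI)
      thus False using fK[OF x] e by simp
    qed
  qed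
  thus ?thesis using fK by blast
qed

end

lemma reg_cardSuc: assumes "Card_order k" "infinite (Field k)" shows "reg (cardSuc k)"
proof
  show "Card_order (cardSuc k)" using cardSuc_Card_order[OF assms(1)] .
  show "regularCard (cardSuc k)" using infinite_cardSuc_regularCard assms by blast
  have "|UNIV::nat set| \<le>o |Field k|" using infinite_iff_card_of_nat assms(2) by blast
  moreover have "|Field k| =o k" by (rule card_of_Field_ordIso[OF assms(1)])
  ultimately have "|UNIV::nat set| \<le>o k" by (rule ordLeq_ordIso_trans)
  thus "|UNIV::nat set| <o cardSuc k" using cardSuc_greater[OF assms(1)] by (rule ordLeq_ordLess_trans)
qed

theorem theorem2p2:
  fixes k :: "'k rel"
  assumes "Card_order k" and "infinite (Field k)"
  shows "clubsuit_diamond (cardSuc k) \<longrightarrow> Galvin (cardSuc k) (cardSuc (cardSuc k))"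
proof
  assume "clubsuit_diamond (cardSuc k)"
  then obtain S where S: "superclub_seq (cardSuc k) S" unfolding clubsuit_diamond_def by blast
  interpret R: reg "cardSuc k" by (rule reg_cardSuc[OF assms])
  let ?r = "cardSuc k"
  let ?m = "cardSuc (cardSuc k)"
  let ?F = "Field ?r"
  let ?Fm = "Field ?m"
  show "Galvin ?r ?m"
    unfolding Galvin_def
  proof (intro allI impI)
    fix C :: "'k set set \<Rightarrow> 'k set set"
    assume hC: "\<forall>\<alpha>\<in>?Fm. C \<alpha> \<in> club_filter ?r"
    define C' where "C' = (\<lambda>\<alpha>. SOME D. club ?r D \<and> D \<subseteq> C \<alpha>)"
    have C': "\<And>\<alpha>. \<alpha> \<in> ?Fm \<Longrightarrow> club ?r (C' \<alpha>) \<and> C' \<alpha> \<subseteq> C \<alpha>"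
    proof -
      fix \<alpha> assume "\<alpha> \<in> ?Fm"
      hence "\<exists>D. club ?r D \<and> D \<subseteq> C \<alpha>" using hC unfolding club_filter_def by blast
      thus "club ?r (C' \<alpha>) \<and> C' \<alpha> \<subseteq> C \<alpha>" unfolding C'_def by (rule someI_ex)
    qed
    have CF: "\<And>\<alpha>. \<alpha> \<in> ?Fm \<Longrightarrow> C \<alpha> \<subseteq> ?F" using hC unfolding club_filter_def by blast
    define Bf where "Bf = (\<lambda>\<alpha>. SOME B. B \<subseteq> C' \<alpha> \<and> |B| =o ?r \<and> stationary ?r {d\<in>?F. B \<inter> underS ?r d = S d})"
    have Bf: "\<And>\<alpha>. \<alpha> \<in> ?Fm \<Longrightarrow> Bf \<alpha> \<subseteq> C' \<alpha> \<and> |Bf \<alpha>| =o ?r \<and> stationary ?r {d\<in>?F. Bf \<alpha> \<inter> underS ?r d = S d}"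
    proof -
      fix \<alpha> assume a: "\<alpha> \<in> ?Fm"
      have cl: "club ?r (C' \<alpha>)" using C'[OF a] by blast
      hence sub: "C' \<alpha> \<subseteq> ?F" unfolding club_def by blast
      have "|C' \<alpha>| =o ?r" using R.card_unb[OF sub] R.club_unb[OF cl] by blast
      hence "\<exists>B. B \<subseteq> C' \<alpha> \<and> |B| =o ?r \<and> stationary ?r {d\<in>?F. B \<inter> underS ?r d = S d}"
        using S sub unfolding superclub_seq_def by blast
      thus "Bf \<alpha> \<subseteq> C' \<alpha> \<and> |Bf \<alpha>| =o ?r \<and> stationary ?r {d\<in>?F. Bf \<alpha> \<inter> underS ?r d = S d}"
        unfolding Bf_def by (rule someI_ex)
    qed
    define T where "T = (\<lambda>\<alpha>. {d\<in>?F. Bf \<alpha> \<inter> underS ?r d = S d})"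
    define K where "K = (\<lambda>d. {\<alpha>\<in>?Fm. d \<in> T \<alpha>})"
    define Small where "Small = {d\<in>?F. |K d| \<le>o ?r}"
    define Bad where "Bad = (\<Union>d\<in>Small. K d)"
    have rF: "?r =o |?F|" using card_of_Field_ordIso[OF R.co] by (rule ordIso_symmetric)
    have "|Bad| \<le>o |?F|" unfolding Bad_def
    proof (rule card_of_UNION_ordLeq_infinite[OF R.infF])
      show "|Small| \<le>o |?F|" unfolding Small_def by (rule card_of_mono1) blast
      show "\<forall>d\<in>Small. |K d| \<le>o |?F|"
      proof
        fix d assume "d \<in> Small"
        hence "|K d| \<le>o ?r" unfolding Small_def by blast
        thus "|K d| \<le>o |?F|" using rF by (rule ordLeq_ordIso_trans)
      qed
    qed
    have "\<not> ?Fm \<subseteq> Bad"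
    proof
      assume "?Fm \<subseteq> Bad"
      hence "|?Fm| \<le>o |Bad|" by (rule card_of_mono1)
      hence "|?Fm| \<le>o |?F|" using \<open>|Bad| \<le>o |?F|\<close> by (rule ordLeq_transitive)
      moreover have "|?F| =o ?r" by (rule card_of_Field_ordIso[OF R.co])
      ultimately have "|?Fm| \<le>o ?r" by (rule ordLeq_ordIso_trans)
      moreover have "|?Fm| =o ?m" by (rule card_of_Field_ordIso[OF cardSuc_Card_order[OF R.co]])
      ultimately have "?m \<le>o ?r" using ordIso_ordLeq_trans[OF ordIso_symmetric] by blast
      thus False using not_ordLess_ordLeq[OF cardSuc_greater[OF R.co]] by simp
    qed
    then obtain \<alpha>0 where a0: "\<alpha>0 \<in> ?Fm" "\<alpha>0 \<notin> Bad" by blast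
    define T0 where "T0 = T \<alpha>0"
    have T0F: "T0 \<subseteq> ?F" unfolding T0_def T_def by blast
    have T0stat: "stationary ?r T0" using Bf[OF a0(1)] unfolding T0_def T_def by blast
    have bigK: "\<And>d. d \<in> T0 \<Longrightarrow> ?r <o |K d|"
    proof -
      fix d assume d: "d \<in> T0"
      have "\<alpha>0 \<in> K d" using d a0(1) unfolding K_def T0_def by blast
      hence "d \<notin> Small" using a0(2) unfolding Bad_def by blast
      hence "\<not> |K d| \<le>o ?r" using d T0F unfolding Small_def by blast
      thus "?r <o |K d|" by (rule iffD1[OF not_ordLeq_iff_ordLess[OF R.WO card_of_Well_order, of "K d"]])
    qed
    have "\<forall>d\<in>T0. \<forall>Y::'k set set set. |Y| <o ?r \<longrightarrow> (\<exists>x\<in>K d. x \<notin> Y)"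
    proof (intro ballI allI impI)
      fix d and Y :: "'k set set set" assume d: "d \<in> T0" and Y: "|Y| <o ?r"
      show "\<exists>x\<in>K d. x \<notin> Y"
      proof (rule ccontr)
        assume "\<not> (\<exists>x\<in>K d. x \<notin> Y)"
        hence "K d \<subseteq> Y" by blast
        hence "|K d| \<le>o |Y|" by (rule card_of_mono1)
        hence "|K d| <o ?r" using Y by (rule ordLeq_ordLess_trans)
        hence "|K d| <o |K d|" using bigK[OF d] by (rule ordLess_transitive)
        thus False using ordLess_irreflexive by blast
      qed
    qed
    then obtain f where f: "inj_on f T0" "\<forall>d\<in>T0. f d \<in> K d" using R.inj_choice[OF T0F] by blast
    define I where "I = f ` T0"
    have IFm: "I \<subseteq> ?Fm" using f(2) unfolding I_def K_def by blast
    have "\<exists>g. bij_betw g T0 I" unfolding I_def using inj_on_imp_bij_betw[OF f(1)] by blast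
    hence "|T0| =o |I|" by (simp only: card_of_ordIso)
    moreover have "|T0| =o ?r" using R.card_unb[OF T0F] R.stat_unb[OF T0stat] by blast
    ultimately have cardI: "|I| =o ?r" by (rule ordIso_transitive[OF ordIso_symmetric])
    define B0 where "B0 = Bf \<alpha>0"
    have B0F: "B0 \<subseteq> ?F" using Bf[OF a0(1)] C'[OF a0(1)] CF[OF a0(1)] unfolding B0_def by blast
    have B0card: "|B0| =o ?r" using Bf[OF a0(1)] unfolding B0_def by blast
    have accc: "club ?r {a. accp ?r B0 a}"
      using R.acc_club[OF B0F] R.full_unb[OF B0F B0card] by blast
    have Dclub: "\<forall>d\<in>T0. club ?r (C' (f d))"
    proof
      fix d assume "d \<in> T0"
      hence "f d \<in> ?Fm" using f(2) unfolding K_def by blast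
      thus "club ?r (C' (f d))" using C' by blast
    qed
    let ?E = "{e\<in>{a. accp ?r B0 a}. \<forall>d\<in>T0. R.lt d e \<longrightarrow> e \<in> C' (f d)}"
    have Eclub: "club ?r ?E" by (rule R.diag_club[OF accc T0F Dclub])
    have Esub: "?E \<subseteq> (\<Inter>\<alpha>\<in>I. C \<alpha>)"
    proof
      fix e assume e: "e \<in> ?E"
      have eF: "e \<in> ?F" using e R.accpF by blast
      show "e \<in> (\<Inter>\<alpha>\<in>I. C \<alpha>)"
      proof
        fix \<alpha> assume "\<alpha> \<in> I"
        then obtain d where d: "d \<in> T0" and ad: "\<alpha> = f d" unfolding I_def by blast
        have aK: "\<alpha> \<in> K d" using f(2) d ad by blast
        hence aFm: "\<alpha> \<in> ?Fm" and dTa: "d \<in> T \<alpha>" unfolding K_def by auto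
        have dF: "d \<in> ?F" using d T0F by blast
        have agree: "Bf \<alpha> \<inter> underS ?r d = B0 \<inter> underS ?r d"
          using dTa d unfolding T_def T0_def B0_def by simp
        have "e \<in> C' \<alpha>"
        proof (cases "R.lt d e")
          case True thus ?thesis using e d ad by blast
        next
          case False
          hence ed: "(e,d) \<in> ?r" using R.not_lt[OF dF eF] by blast
          have "underS ?r e \<subseteq> underS ?r d"
          proof
            fix b assume "b \<in> underS ?r e"
            hence "R.lt b e" unfolding R.underS_lt by simp
            hence "R.lt b d" using R.lt_le_trans[OF _ ed] by blast
            thus "b \<in> underS ?r d" unfolding R.underS_lt by simp
          qed
          hence "Bf \<alpha> \<inter> underS ?r e = B0 \<inter> underS ?r e" using agree by blast
          hence "accp ?r (Bf \<alpha>) e = accp ?r B0 e" by (rule accp_cong)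
          hence "accp ?r (Bf \<alpha>) e" using e by blast
          moreover have "Bf \<alpha> \<subseteq> C' \<alpha>" using Bf[OF aFm] by blast
          ultimately have "accp ?r (C' \<alpha>) e" by (rule accp_mono)
          thus "e \<in> C' \<alpha>" using C'[OF aFm] R.closedD unfolding club_def by blast
        qed
        thus "e \<in> C \<alpha>" using C'[OF aFm] by blast
      qed
    qed
    have "I \<noteq> {}"
    proof -
      have "?F \<noteq> {}" using R.infF by auto
      then obtain x where "x \<in> ?F" by blast
      then obtain b where "b \<in> T0" using R.stat_unb[OF T0stat] by blast
      thus ?thesis unfolding I_def by blast
    qed
    then obtain \<alpha>1 where "\<alpha>1 \<in> I" by blast
    hence "(\<Inter>\<alpha>\<in>I. C \<alpha>) \<subseteq> ?F" using CF IFm by blast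
    hence "(\<Inter>\<alpha>\<in>I. C \<alpha>) \<in> club_filter ?r" unfolding club_filter_def using Eclub Esub by blast
    thus "\<exists>I. I \<subseteq> ?Fm \<and> (card_of I, ?r) \<in> ordIso \<and> (\<Inter>\<alpha>\<in>I. C \<alpha>) \<in> club_filter ?r"
      using IFm cardI by blast
  qed
qed

end
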